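(* Let $M$ be a $4$-dimensional manifold, $F\subset T^r_sM$ a vector subbundle of a tensor bundle with adapted fiber-linear coordinates $(x^m,v_A)$, and $J^2F$ its second-order jet bundle with coordinates $(x^m,v_A,v_{Ap},v_{AI})$. Consider the system of $140$ first-order linear partial differential equations for a function $L$ on $J^2F$ \begin{align*} 0 &= L_{:m},\\ 0 &= L^{:A} C_{An}^{Bm} v_B + L^{:Ap} \bigl[ C_{An}^{Bm} \delta_p^q - \delta_A^B \delta^q_n \delta^m_p \bigr] v_{Bq} + L^{:AI} \bigl[ C_{An}^{Bm} \delta_I^J - 2 \delta_A^B J_I^{pm} I^J_{pn} \bigr] v_{BJ} + L\, \delta^m_n,\\ 0 &= L^{:A(p\vert}C_{An}^{B \vert m)} v_B + L^{: AI} \bigl[ C_{An}^{B(m\vert}\, 2 J_I^{\vert p) q} - \delta^B_A J_I^{pm} \delta_n^q \bigr] v_{Bq},\\ 0 &= L^{:AI} C_{An}^{B(m\vert} v_B J_I^{\vert p q )}, \end{align*} and the corresponding homogeneous system obtained by deleting the term $L\,\delta^m_n$ from the second equation. Let $k:=\dim(J^2F)-140$, let $\Psi_1,\dots,\Psi_k$ be $k$ functionally independent solutions of the homogeneous system, and let $\omega$ be any particular solution of the (inhomogeneous) system. Then the general solution of the system is of the form $$\omega\cdot\mathcal{F}(\Psi_1,\dots,\Psi_k),$$ where $\mathcal{F}$ is an arbitrary function.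
   Context: Spacetime indices $m,n,p,q,\dots$ run over $0,\dots,3$; $A,B,\dots$ run over the fiber dimension of $F$; repeated indices are summed; round brackets denote symmetrization over the enclosed indices (indices between vertical bars excluded). The index $I,J$ runs over $0,\dots,9$ and labels symmetric index pairs via constant intertwiners $I^I_{pq}$, $J_I^{pq}$ (each symmetric in $pq$) with $I^I_{pq}J_J^{pq}=\delta^I_J$, $v_{AI}=J_I^{ij}v_{Aij}$, $v_{Aij}=I^I_{ij}v_{AI}$, where $v_{Ap}$, $v_{Aij}$ are jet coordinates of first and symmetric second derivatives. $L_{:m}=\partial L/\partial x^m$, $L^{:A}=\partial L/\partial v_A$, $L^{:Ap}=\partial L/\partial v_{Ap}$, $L^{:AI}=\partial L/\partial v_{AI}$. The constants $C^{Bm}_{An}$ are defined by the lift of vector fields $\xi$ on $M$ to $F$ induced by the natural (pushforward/pullback) action of diffeomorphisms on tensors: $\xi_F=\xi^m\frac{\partial}{\partial x^m}+C_{An}^{Bm}v_B\,\partial_m\xi^n\frac{\partial}{\partial v_A}$. *)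

theory Defs
  imports "HOL-Analysis.Analysis" "HOL-Library.Numeral_Type"
begin

text \<open>Coordinates on J^2F: (x^m, v_A, v_{Ap}, v_{AI}); spacetime indices have type 4,
  symmetric index pairs I have type 10, fiber indices A have the finite type 'a.\<close>
type_synonym 'a jet2 = "(real^4) \<times> (real^'a) \<times> (real^4^'a) \<times> (real^10^'a)"

datatype eqidx = Eq1 4 | Eq2 4 4 | Eq3 4 4 4 | Eq4 4 4 4 4

text \<open>Convention: C A n B m stands for C_{An}^{Bm}; Ii K p q for I^K_{pq}; Ji K p q for J_K^{pq}.\<close>

text \<open>Components of tensors in T^r_s: functions of (upper index list, lower index list).
  tens_rep n m is the generator of the natural infinitesimal action of a vector field xi
  with only d_m xi^n = 1 (coefficient of d_m xi^n in the lift).\<close>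
definition tens_rep :: "4 \<Rightarrow> 4 \<Rightarrow> (4 list \<times> 4 list \<Rightarrow> real) \<Rightarrow> (4 list \<times> 4 list \<Rightarrow> real)" where
  "tens_rep n m T = (\<lambda>(u, l).
      (\<Sum>i<length u. if u ! i = n then T (u[i := m], l) else 0)
    - (\<Sum>j<length l. if l ! j = m then T (u, l[j := n]) else 0))"

text \<open>F is a subbundle of T^r_s whose fibre-linear coordinates v_A are the coefficients
  with respect to the (constant) basis E_A of the fibre, and C is the coefficient tensor of
  the natural lift: the lift of xi to F is xi^m d_m + C_{An}^{Bm} v_B d_m xi^n d/dv_A.\<close>
definition natural_lift_coeffs ::
  "nat \<Rightarrow> nat \<Rightarrow> ('a::finite \<Rightarrow> (4 list \<times> 4 list \<Rightarrow> real)) \<Rightarrow> ('a \<Rightarrow> 4 \<Rightarrow> 'a \<Rightarrow> 4 \<Rightarrow> real) \<Rightarrow> bool" where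
  "natural_lift_coeffs r s E C \<longleftrightarrow>
     (\<forall>A u l. E A (u, l) \<noteq> 0 \<longrightarrow> length u = r \<and> length l = s) \<and>
     (\<forall>c. (\<forall>u l. (\<Sum>A\<in>UNIV. c A * E A (u, l)) = 0) \<longrightarrow> (\<forall>A. c A = 0)) \<and>
     (\<forall>B n m u l. length u = r \<longrightarrow> length l = s \<longrightarrow>
        tens_rep n m (E B) (u, l) = (\<Sum>A\<in>UNIV. C A n B m * E A (u, l)))"

definition intertwiners :: "(10 \<Rightarrow> 4 \<Rightarrow> 4 \<Rightarrow> real) \<Rightarrow> (10 \<Rightarrow> 4 \<Rightarrow> 4 \<Rightarrow> real) \<Rightarrow> bool" where
  "intertwiners Ii Ji \<longleftrightarrow>
     (\<forall>K p q. Ii K p q = Ii K q p) \<and> (\<forall>K p q. Ji K p q = Ji K q p) \<and>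
     (\<forall>K K'. (\<Sum>p\<in>UNIV. \<Sum>q\<in>UNIV. Ii K p q * Ji K' p q) = (if K = K' then 1 else 0)) \<and>
     (\<forall>p q r s. (\<Sum>K\<in>UNIV. Ii K p q * Ji K r s) =
         ((if p = r \<and> q = s then 1 else 0) + (if p = s \<and> q = r then 1 else 0)) / 2)"

text \<open>The vector field on J^2F whose derivative of L is the left-hand side of each equation
  (without the term L delta^m_n).\<close>
fun eqfield :: "('a::finite \<Rightarrow> 4 \<Rightarrow> 'a \<Rightarrow> 4 \<Rightarrow> real) \<Rightarrow> (10 \<Rightarrow> 4 \<Rightarrow> 4 \<Rightarrow> real) \<Rightarrow>
    (10 \<Rightarrow> 4 \<Rightarrow> 4 \<Rightarrow> real) \<Rightarrow> eqidx \<Rightarrow> 'a jet2 \<Rightarrow> 'a jet2" where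
  "eqfield C Ii Ji (Eq1 m) z = (axis m 1, 0, 0, 0)"
| "eqfield C Ii Ji (Eq2 n m) (x, v, vp, vI) =
     (0,
      \<chi> A. (\<Sum>B\<in>UNIV. C A n B m * v $ B),
      \<chi> A p. (\<Sum>B\<in>UNIV. \<Sum>q\<in>UNIV.
                 (C A n B m * (if p = q then 1 else 0)
                  - (if A = B \<and> q = n \<and> m = p then 1 else 0)) * vp $ B $ q),
      \<chi> A K. (\<Sum>B\<in>UNIV. \<Sum>K'\<in>UNIV.
                 (C A n B m * (if K = K' then 1 else 0)
                  - 2 * (if A = B then 1 else 0) * (\<Sum>p\<in>UNIV. Ji K p m * Ii K' p n)) * vI $ B $ K'))"
| "eqfield C Ii Ji (Eq3 n m p) (x, v, vp, vI) =
     (0, 0,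
      \<chi> A r. (\<Sum>B\<in>UNIV. ((if r = p then C A n B m else 0) + (if r = m then C A n B p else 0)) / 2 * v $ B),
      \<chi> A K. (\<Sum>B\<in>UNIV. \<Sum>q\<in>UNIV.
                 ((C A n B m * 2 * Ji K p q + C A n B p * 2 * Ji K m q) / 2
                  - (if A = B then 1 else 0) * Ji K p m * (if n = q then 1 else 0)) * vp $ B $ q))"
| "eqfield C Ii Ji (Eq4 n m p q) (x, v, vp, vI) =
     (0, 0, 0,
      \<chi> A K. (\<Sum>B\<in>UNIV. v $ B *
                 (C A n B m * Ji K p q + C A n B m * Ji K q p + C A n B p * Ji K m q
                + C A n B p * Ji K q m + C A n B q * Ji K m p + C A n B q * Ji K p m) / 6))"

fun inhom :: "eqidx \<Rightarrow> real" where
  "inhom (Eq2 n m) = (if m = n then 1 else 0)"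
| "inhom _ = 0"

definition solves_on ::
  "('a::finite \<Rightarrow> 4 \<Rightarrow> 'a \<Rightarrow> 4 \<Rightarrow> real) \<Rightarrow> (10 \<Rightarrow> 4 \<Rightarrow> 4 \<Rightarrow> real) \<Rightarrow>
   (10 \<Rightarrow> 4 \<Rightarrow> 4 \<Rightarrow> real) \<Rightarrow> (eqidx \<Rightarrow> real) \<Rightarrow> 'a jet2 set \<Rightarrow> ('a jet2 \<Rightarrow> real) \<Rightarrow> bool" where
  "solves_on C Ii Ji c V L \<longleftrightarrow>
     (\<forall>z\<in>V. L differentiable (at z) \<and>
        (\<forall>\<alpha>. frechet_derivative L (at z) (eqfield C Ii Ji \<alpha> z) + c \<alpha> * L z = 0))"

definition C1_on :: "'b::euclidean_space set \<Rightarrow> ('b \<Rightarrow> 'c::real_normed_vector) \<Rightarrow> bool" where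
  "C1_on U f \<longleftrightarrow> (\<forall>z\<in>U. f differentiable (at z)) \<and>
     (\<forall>h. continuous_on U (\<lambda>z. frechet_derivative f (at z) h))"

end

theory Submission
  imports Defs
begin

lemma submersion_factor:
  fixes \<Psi> :: "'b::euclidean_space \<Rightarrow> 'c::euclidean_space" and H :: "'b \<Rightarrow> real"
  assumes U: "open U" and z0: "z0 \<in> U"
    and dPsi: "\<And>z. z \<in> U \<Longrightarrow> (\<Psi> has_derivative \<Psi>' z) (at z)"
    and cPsi: "\<And>h. continuous_on U (\<lambda>z. \<Psi>' z h)"
    and sPsi: "surj (\<Psi>' z0)"
    and dH: "\<And>z. z \<in> U \<Longrightarrow> (H has_derivative H' z) (at z)"
    and ker: "\<And>z h. z \<in> U \<Longrightarrow> \<Psi>' z h = 0 \<Longrightarrow> H' z h = 0"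
  shows "\<exists>V F. open V \<and> z0 \<in> V \<and> V \<subseteq> U \<and> (\<forall>z\<in>V. H z = F (\<Psi> z))"
proof -
  define D where "D = \<Psi>' z0"
  have linD: "linear D" using dPsi[OF z0] unfolding D_def by (simp add: has_derivative_linear)
  obtain g where ling: "linear g" and Dg: "D \<circ> g = id"
    using real_vector.linear_surjective_right_inverse[OF linD] sPsi unfolding D_def by blast
  have Dg': "D (g y) = y" for y using Dg by (metis comp_apply id_apply)
  define \<Phi> where "\<Phi> z = z + g (\<Psi> z - D z)" for z
  define \<Phi>' where "\<Phi>' z = Blinfun (\<lambda>h. h + g (\<Psi>' z h - D h))" for z
  have lin\<Psi>': "linear (\<Psi>' z)" if "z \<in> U" for z using dPsi[OF that] by (simp add: has_derivative_linear)
  have blg: "bounded_linear g" using ling by (simp add: linear_conv_bounded_linear)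
  have blD: "bounded_linear D" using dPsi[OF z0] unfolding D_def by (simp add: has_derivative_bounded_linear)
  have blP: "bounded_linear (\<Psi>' z)" if "z \<in> U" for z using dPsi[OF that] by (simp add: has_derivative_bounded_linear)
  have bl: "bounded_linear (\<lambda>h. h + g (\<Psi>' z h - D h))" if "z \<in> U" for z
    by (intro bounded_linear_add bounded_linear_ident bounded_linear_compose[OF blg] bounded_linear_sub blP[OF that] blD)
  have \<Phi>'_apply: "blinfun_apply (\<Phi>' z) h = h + g (\<Psi>' z h - D h)" if "z \<in> U" for z h
    unfolding \<Phi>'_def using bl[OF that] by (simp add: bounded_linear_Blinfun_apply)
  have derPhi: "(\<Phi> has_derivative blinfun_apply (\<Phi>' z)) (at z)" if "z \<in> U" for z
  proof -
    have "(\<Phi> has_derivative (\<lambda>h. h + g (\<Psi>' z h - D h))) (at z)"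
      unfolding \<Phi>_def
      by (intro derivative_intros dPsi[OF that] linear_imp_has_derivative linD
          bounded_linear.has_derivative[OF linear_conv_bounded_linear[THEN iffD1, OF ling]])
    moreover have "blinfun_apply (\<Phi>' z) = (\<lambda>h. h + g (\<Psi>' z h - D h))"
      using \<Phi>'_apply[OF that] by auto
    ultimately show ?thesis by simp
  qed
  have contPhi': "continuous_on U \<Phi>'"
  proof (rule continuous_on_blinfun_componentwise)
    fix i :: 'b
    have "continuous_on U (\<lambda>z. i + g (\<Psi>' z i - D i))"
      by (intro continuous_intros cPsi
          continuous_on_compose2[OF linear_continuous_on[OF linear_conv_bounded_linear[THEN iffD1, OF ling]], of _ _ UNIV]) auto
    then show "continuous_on U (\<lambda>z. blinfun_apply (\<Phi>' z) i)"
      by (rule continuous_on_eq) (simp add: \<Phi>'_apply)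
  qed
  have id0: "id_blinfun o\<^sub>L \<Phi>' z0 = id_blinfun"
    by (rule blinfun_eqI) (simp add: \<Phi>'_apply[OF z0] D_def linear_0[OF ling])
  obtain U' V' G G' where U': "open U'" "U' \<subseteq> U" "z0 \<in> U'" and V': "open V'" "\<Phi> z0 \<in> V'"
    and hom: "homeomorphism U' V' \<Phi> G"
    and dG: "\<And>y. y \<in> V' \<Longrightarrow> (G has_derivative G' y) (at y)"
    and "\<And>y. y \<in> V' \<Longrightarrow> G' y = inv (blinfun_apply (\<Phi>' (G y)))"
    and "\<And>y. y \<in> V' \<Longrightarrow> bij (blinfun_apply (\<Phi>' (G y)))"
    by (rule inverse_function_theorem[OF U derPhi contPhi' z0 id0]) (assumption, (rule that; assumption))

  have GPhi: "G (\<Phi> z) = z" if "z \<in> U'" for z using hom that by (rule homeomorphism_apply1)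
  have PhiG: "\<Phi> (G y) = y" if "y \<in> V'" for y using hom that by (rule homeomorphism_apply2)
  have GV: "G y \<in> U'" if "y \<in> V'" for y using hom that unfolding homeomorphism_def by blast
  have contPhi: "continuous_on U' \<Phi>" using hom unfolding homeomorphism_def by blast
  have DPhi: "D (\<Phi> z) = \<Psi> z" for z
    unfolding \<Phi>_def using linD Dg' by (simp add: linear_add)
  have PsiG: "\<Psi> (G y) = D y" if "y \<in> V'" for y
    using DPhi[of "G y"] PhiG[OF that] by simp
  have kerG: "H' (G y) (G' y h) = 0" if y: "y \<in> V'" and h: "D h = 0" for y h
  proof -
    have GU: "G y \<in> U" using GV[OF y] U' by blast
    have d1: "((\<Psi> \<circ> G) has_derivative (\<Psi>' (G y) \<circ> G' y)) (at y)"
      by (rule diff_chain_at[OF dG[OF y] dPsi[OF GU]])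
    have "(D has_derivative D) (at y)" using linD by (rule linear_imp_has_derivative)
    then have d2: "((\<Psi> \<circ> G) has_derivative D) (at y)"
      by (rule has_derivative_transform_within_open[OF _ V'(1) y]) (simp add: PsiG)
    have "\<Psi>' (G y) \<circ> G' y = D" using has_derivative_unique[OF d1 d2] .
    then have "\<Psi>' (G y) (G' y h) = 0" using h by (metis comp_apply)
    then show ?thesis using ker[OF GU] by blast
  qed
  obtain e where e: "e > 0" "ball (\<Phi> z0) e \<subseteq> V'"
    using V' open_contains_ball by blast
  define B where "B = ball (\<Phi> z0) e"
  have const: "H (G y1) = H (G y2)" if y1: "y1 \<in> B" and y2: "y2 \<in> B" and Dy: "D y1 = D y2" for y1 y2
  proof -
    define p where "p t = y1 + t *\<^sub>R (y2 - y1)" for t :: real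
    have pB: "p t \<in> B" if "t \<in> {0..1}" for t
    proof -
      have "(1 - t) *\<^sub>R y1 + t *\<^sub>R y2 \<in> B"
        using convexD_alt[OF _ y1 y2, of t] that unfolding B_def by auto
      moreover have "(1 - t) *\<^sub>R y1 + t *\<^sub>R y2 = p t"
        unfolding p_def by (simp add: algebra_simps)
      ultimately show ?thesis by simp
    qed
    have Dv: "D (s *\<^sub>R (y2 - y1)) = 0" for s
      using linD Dy by (simp add: linear_scale linear_diff)
    have "((\<lambda>t. H (G (p t))) has_derivative (\<lambda>s. 0)) (at t within {0..1})" if t: "t \<in> {0..1}" for t
    proof -
      have pt: "p t \<in> V'" using pB[OF t] e unfolding B_def by blast
      have GU: "G (p t) \<in> U" using GV[OF pt] U'(2) by blast
      have dp: "(p has_derivative (\<lambda>s. s *\<^sub>R (y2 - y1))) (at t)"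
        unfolding p_def by (auto intro!: derivative_eq_intros)
      have "(((H \<circ> G) \<circ> p) has_derivative ((H' (G (p t)) \<circ> G' (p t)) \<circ> (\<lambda>s. s *\<^sub>R (y2 - y1)))) (at t)"
        by (rule diff_chain_at[OF dp diff_chain_at[OF dG[OF pt] dH[OF GU]]])
      moreover have "((H' (G (p t)) \<circ> G' (p t)) \<circ> (\<lambda>s. s *\<^sub>R (y2 - y1))) = (\<lambda>s. 0)"
        using kerG[OF pt Dv] by (auto simp: fun_eq_iff)
      ultimately show ?thesis by (auto simp: o_def intro: has_derivative_at_withinI)
    qed
    then obtain c where "\<forall>t\<in>{0..1}. H (G (p t)) = c"
      using has_derivative_zero_constant[OF convex_real_interval(5)] by blast
    then have "H (G (p 0)) = H (G (p 1))" by auto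
    then show ?thesis unfolding p_def by simp
  qed
  define F where "F w = H (G (SOME y. y \<in> B \<and> D y = w))" for w
  define V where "V = U' \<inter> \<Phi> -` B"
  have "open V" unfolding V_def B_def by (rule continuous_open_preimage[OF contPhi U'(1) open_ball])
  moreover have "z0 \<in> V" unfolding V_def B_def using U' e by auto
  moreover have "V \<subseteq> U" unfolding V_def using U' by auto
  moreover have "\<forall>z\<in>V. H z = F (\<Psi> z)"
  proof
    fix z assume z: "z \<in> V"
    then have zU: "z \<in> U'" and zB: "\<Phi> z \<in> B" unfolding V_def by auto
    have ex: "\<exists>y. y \<in> B \<and> D y = \<Psi> z" using zB DPhi by blast
    define y where "y = (SOME y. y \<in> B \<and> D y = \<Psi> z)"
    have y: "y \<in> B" "D y = \<Psi> z" using someI_ex[OF ex] unfolding y_def by auto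
    have "F (\<Psi> z) = H (G y)" unfolding F_def y_def ..
    also have "\<dots> = H (G (\<Phi> z))" using const[OF y(1) zB] y(2) DPhi by simp
    also have "\<dots> = H z" using GPhi[OF zU] by simp
    finally show "H z = F (\<Psi> z)" by simp
  qed
  ultimately show ?thesis by blast
qed


lemma fd_eq:
  assumes "(f has_derivative f') (at x)"
  shows "frechet_derivative f (at x) = f'"
  using has_derivative_unique[OF frechet_derivative_works[THEN iffD1, OF differentiableI[OF assms]] assms] .

lemma kernel_dim:
  fixes D :: "'b::euclidean_space \<Rightarrow> real^'k"
  assumes linD: "linear D" and sD: "surj D"
  shows "dim {h. D h = 0} = DIM('b) - CARD('k)"
proof -
  obtain g where ling: "linear g" and Dg: "D \<circ> g = id"
    using real_vector.linear_surjective_right_inverse[OF linD sD] by blast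
  have Dg': "D (g y) = y" for y using Dg by (metis comp_apply id_apply)
  define S where "S = {h. D h = 0}"
  define T where "T = range g"
  have sS: "subspace S" unfolding S_def by (rule real_vector.linear_subspace_kernel[OF linD])
  have sT: "subspace T" unfolding T_def by (rule real_vector.linear_subspace_image[OF ling subspace_UNIV])
  have sum: "{x + y |x y. x \<in> S \<and> y \<in> T} = UNIV"
  proof -
    have "h \<in> {x + y |x y. x \<in> S \<and> y \<in> T}" for h
    proof -
      have "D (h - g (D h)) = 0" using linD Dg' by (simp add: linear_diff)
      then have "h - g (D h) \<in> S" "g (D h) \<in> T" unfolding S_def T_def by auto
      moreover have "h = (h - g (D h)) + g (D h)" by simp
      ultimately show ?thesis by blast
    qed
    then show ?thesis by blast
  qed
  have int: "dim (S \<inter> T) = 0"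
  proof -
    have "S \<inter> T \<subseteq> {0}"
    proof
      fix x assume "x \<in> S \<inter> T"
      then obtain y where "x = g y" "D x = 0" unfolding S_def T_def by auto
      then have "y = 0" using Dg' by simp
      then show "x \<in> {0}" using \<open>x = g y\<close> linear_0[OF ling] by simp
    qed
    then show ?thesis by (simp add: dim_eq_0)
  qed
  have injg: "inj_on g (span UNIV)"
    by (rule inj_onI) (metis Dg')
  have dT: "dim T = CARD('k)"
    unfolding T_def using dim_image_eq[OF ling injg] by (simp add: dim_UNIV)
  have "dim (UNIV::'b set) + 0 = dim S + dim T"
    using dim_sums_Int[OF sS sT] sum int by simp
  then show ?thesis unfolding S_def[symmetric] using dT by (simp add: dim_UNIV)
qed

theorem mainTheorem3:
  fixes r s :: nat
    and E :: "'a::finite \<Rightarrow> (4 list \<times> 4 list \<Rightarrow> real)"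
    and C :: "'a \<Rightarrow> 4 \<Rightarrow> 'a \<Rightarrow> 4 \<Rightarrow> real"
    and Ii Ji :: "10 \<Rightarrow> 4 \<Rightarrow> 4 \<Rightarrow> real"
    and U :: "'a jet2 set"
    and \<omega> :: "'a jet2 \<Rightarrow> real"
    and \<Psi> :: "'a jet2 \<Rightarrow> real^'k"
  assumes lift: "natural_lift_coeffs r s E C"
    and intw: "intertwiners Ii Ji"
    and U_open: "open U"
    and rank: "\<forall>z\<in>U. dim (range (\<lambda>\<alpha>. eqfield C Ii Ji \<alpha> z)) = 140"
    and k_def: "CARD('k) = DIM('a jet2) - 140"
    and Psi_C1: "C1_on U \<Psi>"
    and Psi_sol: "\<forall>i. solves_on C Ii Ji (\<lambda>_. 0) U (\<lambda>z. \<Psi> z $ i)"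
    and Psi_indep: "\<forall>z\<in>U. surj (frechet_derivative \<Psi> (at z))"
    and omega_sol: "solves_on C Ii Ji inhom U \<omega>"
    and omega_nz: "\<forall>z\<in>U. \<omega> z \<noteq> 0"
  shows "(\<forall>L. solves_on C Ii Ji inhom U L \<longrightarrow>
            (\<forall>z0\<in>U. \<exists>V \<F>. open V \<and> z0 \<in> V \<and> V \<subseteq> U \<and>
                        (\<forall>z\<in>V. L z = \<omega> z * \<F> (\<Psi> z))))
       \<and> (\<forall>V \<F>. open V \<longrightarrow> V \<subseteq> U \<longrightarrow> (\<forall>z\<in>V. \<F> differentiable (at (\<Psi> z))) \<longrightarrow>
            solves_on C Ii Ji inhom V (\<lambda>z. \<omega> z * \<F> (\<Psi> z)))"
  
proof -
  define \<Psi>' where "\<Psi>' z = frechet_derivative \<Psi> (at z)" for z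
  define X where "X z \<alpha> = eqfield C Ii Ji \<alpha> z" for z \<alpha>
  have dPsi: "(\<Psi> has_derivative \<Psi>' z) (at z)" if "z \<in> U" for z
    using Psi_C1 that unfolding C1_on_def \<Psi>'_def by (simp add: frechet_derivative_works)
  have cPsi: "continuous_on U (\<lambda>z. \<Psi>' z h)" for h
    using Psi_C1 unfolding C1_on_def \<Psi>'_def by blast
  have linPsi: "linear (\<Psi>' z)" if "z \<in> U" for z using dPsi[OF that] by (rule has_derivative_linear)
  have PsiX: "\<Psi>' z (X z \<alpha>) = 0" if z: "z \<in> U" for z \<alpha>
  proof -
    have "\<Psi>' z (X z \<alpha>) $ i = 0" for i
    proof -
      have d: "((\<lambda>z. \<Psi> z $ i) has_derivative (\<lambda>h. \<Psi>' z h $ i)) (at z)"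
        by (rule bounded_linear.has_derivative[OF bounded_linear_vec_nth dPsi[OF z]])
      have "frechet_derivative (\<lambda>z. \<Psi> z $ i) (at z) (X z \<alpha>) + 0 * \<Psi> z $ i = 0"
        using Psi_sol z unfolding solves_on_def X_def by blast
      then show ?thesis using fd_eq[OF d] by simp
    qed
    then show ?thesis by (simp add: vec_eq_iff)
  qed
  have kerspan: "h \<in> span (range (X z))" if z: "z \<in> U" and h: "\<Psi>' z h = 0" for z h
  proof -
    have r: "dim (range (X z)) = 140" using rank z unfolding X_def by blast
    have le: "140 \<le> DIM('a jet2)" using dim_subset_UNIV[of "range (X z)"] r by simp
    have dk: "dim {h. \<Psi>' z h = 0} = 140"
      using kernel_dim[OF linPsi[OF z]] Psi_indep z k_def le unfolding \<Psi>'_def by simp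
    have sub: "span (range (X z)) \<subseteq> {h. \<Psi>' z h = 0}"
      by (rule span_minimal) (auto simp: PsiX[OF z] real_vector.linear_subspace_kernel[OF linPsi[OF z]])
    have "span (range (X z)) = {h. \<Psi>' z h = 0}"
      by (rule subspace_dim_equal[OF subspace_span real_vector.linear_subspace_kernel[OF linPsi[OF z]] sub])
         (simp add: dk r dim_span)
    then show ?thesis using h by blast
  qed
  have part1: "\<forall>z0\<in>U. \<exists>V \<F>. open V \<and> z0 \<in> V \<and> V \<subseteq> U \<and> (\<forall>z\<in>V. L z = \<omega> z * \<F> (\<Psi> z))"
    if Lsol: "solves_on C Ii Ji inhom U L" for L
  proof
    fix z0 assume z0: "z0 \<in> U"
    define L' where "L' z = frechet_derivative L (at z)" for z
    define w' where "w' z = frechet_derivative \<omega> (at z)" for z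
    define H where "H z = L z / \<omega> z" for z
    define H' where "H' z = (\<lambda>h. (L' z h * \<omega> z - L z * w' z h) / (\<omega> z * \<omega> z))" for z
    have dL: "(L has_derivative L' z) (at z)" if "z \<in> U" for z
      using Lsol that unfolding solves_on_def L'_def by (simp add: frechet_derivative_works)
    have dw: "(\<omega> has_derivative w' z) (at z)" if "z \<in> U" for z
      using omega_sol that unfolding solves_on_def w'_def by (simp add: frechet_derivative_works)
    have dH: "(H has_derivative H' z) (at z)" if z: "z \<in> U" for z
      unfolding H_def H'_def by (rule has_derivative_divide'[OF dL[OF z] dw[OF z]]) (use omega_nz z in blast)
    have ker: "H' z h = 0" if z: "z \<in> U" and h: "\<Psi>' z h = 0" for z h
    proof (rule real_vector.linear_eq_0_on_span[OF has_derivative_linear[OF dH[OF z]] _ kerspan[OF z h]])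
      fix x assume "x \<in> range (X z)"
      then obtain \<alpha> where x: "x = X z \<alpha>" by blast
      have e1: "L' z x = - inhom \<alpha> * L z"
        using Lsol z unfolding solves_on_def L'_def x X_def by (simp add: eq_neg_iff_add_eq_0)
      have e2: "w' z x = - inhom \<alpha> * \<omega> z"
        using omega_sol z unfolding solves_on_def w'_def x X_def by (simp add: eq_neg_iff_add_eq_0)
      show "H' z x = 0" unfolding H'_def e1 e2 by (simp add: algebra_simps)
    qed
    obtain V F where V: "open V" "z0 \<in> V" "V \<subseteq> U" and HF: "\<forall>z\<in>V. H z = F (\<Psi> z)"
      using submersion_factor[OF U_open z0 dPsi cPsi _ dH ker] Psi_indep z0 unfolding \<Psi>'_def by blast
    have "\<forall>z\<in>V. L z = \<omega> z * F (\<Psi> z)"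
    proof
      fix z assume "z \<in> V"
      then have "L z / \<omega> z = F (\<Psi> z)" "\<omega> z \<noteq> 0" using HF V omega_nz unfolding H_def by auto
      then show "L z = \<omega> z * F (\<Psi> z)" by (simp add: field_simps)
    qed
    then show "\<exists>V \<F>. open V \<and> z0 \<in> V \<and> V \<subseteq> U \<and> (\<forall>z\<in>V. L z = \<omega> z * \<F> (\<Psi> z))"
      using V by blast
  qed
  have part2: "solves_on C Ii Ji inhom V (\<lambda>z. \<omega> z * \<F> (\<Psi> z))"
    if V: "open V" "V \<subseteq> U" and Fd: "\<forall>z\<in>V. \<F> differentiable (at (\<Psi> z))" for V \<F>
    unfolding solves_on_def
  proof (intro ballI conjI allI)
    fix z assume zV: "z \<in> V"
    then have z: "z \<in> U" using V by blast
    define w' where "w' = frechet_derivative \<omega> (at z)"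
    define F' where "F' = frechet_derivative \<F> (at (\<Psi> z))"
    have dw: "(\<omega> has_derivative w') (at z)"
      using omega_sol z unfolding solves_on_def w'_def by (simp add: frechet_derivative_works)
    have dF: "(\<F> has_derivative F') (at (\<Psi> z))"
      using Fd zV unfolding F'_def by (simp add: frechet_derivative_works)
    have dFP: "((\<lambda>z. \<F> (\<Psi> z)) has_derivative (\<lambda>h. F' (\<Psi>' z h))) (at z)"
      using diff_chain_at[OF dPsi[OF z] dF] by (simp add: o_def)
    have dP: "((\<lambda>z. \<omega> z * \<F> (\<Psi> z)) has_derivative (\<lambda>h. \<omega> z * F' (\<Psi>' z h) + w' h * \<F> (\<Psi> z))) (at z)"
      by (rule has_derivative_mult[OF dw dFP])
    show "(\<lambda>z. \<omega> z * \<F> (\<Psi> z)) differentiable at z" using dP by (rule differentiableI)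
    fix \<alpha>
    have e2: "w' (X z \<alpha>) = - inhom \<alpha> * \<omega> z"
      using omega_sol z unfolding solves_on_def w'_def X_def by (simp add: eq_neg_iff_add_eq_0)
    have F0: "F' 0 = 0" using linear_0[OF has_derivative_linear[OF dF]] .
    show "frechet_derivative (\<lambda>z. \<omega> z * \<F> (\<Psi> z)) (at z) (eqfield C Ii Ji \<alpha> z) + inhom \<alpha> * (\<omega> z * \<F> (\<Psi> z)) = 0"
      unfolding fd_eq[OF dP] X_def[symmetric] PsiX[OF z] F0 e2 by (simp add: algebra_simps)
  qed
  show ?thesis using part1 part2 by blast
qed

end
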